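(* Let $n\ge p\ge1$, $0<\varepsilon<1$, $\lambda>0$, $\tilde a>0$. Define $$K(\lambda,\varepsilon,a,d)=\frac{\lambda(1-\varepsilon)d+a\sqrt{(\varepsilon-d)/2}}{a^2+\lambda^2(1+\varepsilon)d^2},\qquad Q(\lambda,\varepsilon,\tilde a)=\inf_{a\in(0,\tilde a],\,d\in(0,\varepsilon]}K(\lambda,\varepsilon,a,d),$$ and $\eta^*(\tilde a,\varepsilon,\lambda)=\min\{Q(\lambda,\varepsilon,\tilde a),\frac1{2\lambda}\}$. Then $\eta^*(\tilde a,\varepsilon,\lambda)>0$, and for every $X\in\mathbb{R}^{n\times p}$ with $\|X^\top X-I_p\|\le\varepsilon$ and every skew-symmetric $A\in\mathbb{R}^{n\times n}$ with $\|AX\|\le\tilde a$, the quantity $$\eta(X)=\min\left\{\frac{\lambda d(1-d)+\sqrt{\lambda^2d^2(1-d)^2+g^2(\varepsilon-d)}}{g^2},\ \frac{1}{2\lambda}\right\},$$ where $g=\|AX+\lambda X(X^\top X-I_p)\|$ and $d=\|X^\top X-I_p\|$ (first term interpreted as $+\infty$ when $g=0$), satisfies $\eta(X)\ge\eta^*(\tilde a,\varepsilon,\lambda)$.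
   Context: $\|\cdot\|$ denotes the Frobenius norm. $\eta(X)$ is the safeguard step size guaranteeing that $X-\eta(AX+\lambda X(X^\top X-I_p))$ stays in $\{\|Y^\top Y-I_p\|\le\varepsilon\}$ for all $\eta\le\eta(X)$. *)

theory Defs
  imports "HOL-Analysis.Analysis"
begin

text \<open>Matrices are rendered as real^'p^'n (n rows, p columns). The library norm on
  this type is the Euclidean norm of the vector of rows, i.e. the Frobenius norm.\<close>

definition frob :: "real^'c^'r \<Rightarrow> real" where
  "frob M = norm M"

definition Kfun :: "real \<Rightarrow> real \<Rightarrow> real \<Rightarrow> real \<Rightarrow> real" where
  "Kfun lam eps a d =
     (lam * (1 - eps) * d + a * sqrt ((eps - d) / 2)) / (a^2 + lam^2 * (1 + eps) * d^2)"

definition Qfun :: "real \<Rightarrow> real \<Rightarrow> real \<Rightarrow> real" where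
  "Qfun lam eps atil = Inf {Kfun lam eps a d | a d. 0 < a \<and> a \<le> atil \<and> 0 < d \<and> d \<le> eps}"

definition eta_star :: "real \<Rightarrow> real \<Rightarrow> real \<Rightarrow> real" where
  "eta_star atil eps lam = min (Qfun lam eps atil) (1 / (2 * lam))"

text \<open>Safeguard step size; the first term is +infinity when g = 0.\<close>
definition eta_safe :: "real \<Rightarrow> real \<Rightarrow> real^'n^'n \<Rightarrow> real^'p^'n \<Rightarrow> real" where
  "eta_safe lam eps A X =
    (let g = frob (A ** X + lam *\<^sub>R (X ** (transpose X ** X - mat 1)));
         d = frob (transpose X ** X - mat 1)
     in if g = 0 then 1 / (2 * lam)
        else min ((lam * d * (1 - d) + sqrt (lam^2 * d^2 * (1 - d)^2 + g^2 * (eps - d))) / g^2)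
                 (1 / (2 * lam)))"

end

theory Submission imports Defs begin

lemma inner_mm_left:
  fixes M :: "real^'b^'c" and N :: "real^'d^'b" and P :: "real^'d^'c"
  shows "inner (M ** N) P = inner N (transpose M ** P)"
proof -
  have "inner (M ** N) P = (\<Sum>i\<in>UNIV. \<Sum>j\<in>UNIV. \<Sum>k\<in>UNIV. M$i$k * N$k$j * P$i$j)"
    by (simp add: inner_vec_def matrix_matrix_mult_def sum_distrib_right)
  also have "\<dots> = (\<Sum>k\<in>UNIV. \<Sum>j\<in>UNIV. \<Sum>i\<in>UNIV. M$i$k * N$k$j * P$i$j)"
  proof -
    have "(\<Sum>i\<in>UNIV. \<Sum>j\<in>UNIV. \<Sum>k\<in>UNIV. M$i$k * N$k$j * P$i$j)
        = (\<Sum>i\<in>UNIV. \<Sum>k\<in>UNIV. \<Sum>j\<in>UNIV. M$i$k * N$k$j * P$i$j)"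
      by (rule sum.cong, simp, rule sum.swap)
    also have "\<dots> = (\<Sum>k\<in>UNIV. \<Sum>i\<in>UNIV. \<Sum>j\<in>UNIV. M$i$k * N$k$j * P$i$j)"
      by (rule sum.swap)
    also have "\<dots> = (\<Sum>k\<in>UNIV. \<Sum>j\<in>UNIV. \<Sum>i\<in>UNIV. M$i$k * N$k$j * P$i$j)"
      by (rule sum.cong, simp, rule sum.swap)
    finally show ?thesis .
  qed
  also have "\<dots> = inner N (transpose M ** P)"
    by (simp add: inner_vec_def matrix_matrix_mult_def transpose_def sum_distrib_left mult.commute mult.left_commute)
  finally show ?thesis .
qed

lemma inner_mm_right:
  fixes M :: "real^'b^'c" and N :: "real^'d^'b" and P :: "real^'d^'c"
  shows "inner (M ** N) P = inner M (P ** transpose N)"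
proof -
  have "inner (M ** N) P = (\<Sum>i\<in>UNIV. \<Sum>j\<in>UNIV. \<Sum>k\<in>UNIV. M$i$k * N$k$j * P$i$j)"
    by (simp add: inner_vec_def matrix_matrix_mult_def sum_distrib_right)
  also have "\<dots> = (\<Sum>i\<in>UNIV. \<Sum>k\<in>UNIV. \<Sum>j\<in>UNIV. M$i$k * N$k$j * P$i$j)"
    by (rule sum.cong, simp, rule sum.swap)
  also have "\<dots> = inner M (P ** transpose N)"
    by (simp add: inner_vec_def matrix_matrix_mult_def transpose_def sum_distrib_left mult.commute mult.left_commute)
  finally show ?thesis .
qed

lemma inner_transpose:
  fixes M N :: "real^'b^'c"
  shows "inner (transpose M) (transpose N) = inner M N"
  unfolding inner_vec_def transpose_def by (simp, rule sum.swap)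

lemma norm_mm:
  fixes M :: "real^'b^'c" and N :: "real^'d^'b"
  shows "norm (M ** N) \<le> norm M * norm N"
proof -
  have e: "(M ** N)$i$j = inner (M$i) (column j N)" for i j
    by (simp add: matrix_matrix_mult_def inner_vec_def column_def)
  have "(norm (M ** N))^2 = (\<Sum>i\<in>UNIV. \<Sum>j\<in>UNIV. ((M ** N)$i$j)^2)"
    unfolding power2_norm_eq_inner by (simp add: inner_vec_def power2_eq_square)
  also have "\<dots> = (\<Sum>i\<in>UNIV. \<Sum>j\<in>UNIV. (inner (M$i) (column j N))^2)"
    by (simp only: e)
  also have "\<dots> \<le> (\<Sum>i\<in>UNIV. \<Sum>j\<in>UNIV. (norm (M$i))^2 * (norm (column j N))^2)"
    apply (intro sum_mono)
    by (metis abs_le_square_iff Cauchy_Schwarz_ineq2 abs_mult abs_norm_cancel power_mult_distrib)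
  also have "\<dots> = (\<Sum>i\<in>UNIV. (norm (M$i))^2) * (\<Sum>j\<in>UNIV. (norm (column j N))^2)"
    by (simp add: sum_product)
  also have "(\<Sum>j\<in>UNIV. (norm (column j N))^2) = (norm N)^2"
    unfolding power2_norm_eq_inner by (simp add: inner_vec_def column_def power2_eq_square, rule sum.swap)
  also have "(\<Sum>i\<in>UNIV. (norm (M$i))^2) = (norm M)^2"
    unfolding power2_norm_eq_inner by (simp add: inner_vec_def)
  finally have "(norm (M ** N))^2 \<le> (norm M * norm N)^2" by (simp add: power_mult_distrib)
  then show ?thesis by (simp add: power2_le_iff_abs_le)
qed


lemma transpose_diff':
  fixes M N :: "real^'b^'c"
  shows "transpose (M - N) = transpose M - transpose N"
  by (simp add: transpose_def vec_eq_iff)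

lemma matrix_add_rdistrib':
  fixes B C :: "real^'b^'c" and M :: "real^'d^'b"
  shows "(B + C) ** M = B ** M + C ** M"
  by (simp add: matrix_matrix_mult_def vec_eq_iff distrib_right sum.distrib)

lemma cross_zero:
  fixes A :: "real^'n^'n" and X :: "real^'p^'n" and S :: "real^'p^'p"
  assumes "transpose A = - A" "transpose S = S"
  shows "inner (A ** X) (X ** S) = 0"
proof -
  define C where "C = (X ** S) ** transpose X"
  have tC: "transpose C = C"
    unfolding C_def by (simp add: matrix_transpose_mul assms(2) matrix_mul_assoc)
  have e1: "inner (A ** X) (X ** S) = inner A C" unfolding C_def by (rule inner_mm_right)
  have "inner A C = inner (transpose A) (transpose C)" by (simp add: inner_transpose)
  also have "\<dots> = - inner A C" by (simp add: assms(1) tC)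
  finally show ?thesis using e1 by simp
qed

lemma XS_bound:
  fixes X :: "real^'p^'n"
  defines "S \<equiv> transpose X ** X - mat 1"
  shows "(norm (X ** S))^2 \<le> (norm S)^2 + (norm S)^3"
proof -
  have XX: "transpose X ** X = S + mat 1" unfolding S_def by simp
  have "(norm (X ** S))^2 = inner (X ** S) (X ** S)" by (simp add: power2_norm_eq_inner)
  also have "\<dots> = inner S (transpose X ** (X ** S))" by (rule inner_mm_left)
  also have "transpose X ** (X ** S) = S ** S + S"
    by (simp add: matrix_mul_assoc XX matrix_add_rdistrib')
  also have "inner S (S ** S + S) = inner S (S ** S) + (norm S)^2"
    by (simp add: inner_add_right power2_norm_eq_inner)
  also have "inner S (S ** S) \<le> norm S * norm (S ** S)" by (rule Cauchy_Schwarz_ineq2[THEN order_trans[OF abs_ge_self]])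
  also have "\<dots> \<le> norm S * (norm S * norm S)" by (intro mult_left_mono norm_mm) simp
  finally show ?thesis by (simp add: power3_eq_cube power2_eq_square)
qed

lemma g_bound:
  fixes A :: "real^'n^'n" and X :: "real^'p^'n" and lam :: real
  assumes "transpose A = - A" "0 \<le> lam"
  defines "S \<equiv> transpose X ** X - mat 1"
  shows "(norm (A ** X + lam *\<^sub>R (X ** S)))^2 \<le> (norm (A ** X))^2 + lam^2 * ((norm S)^2 + (norm S)^3)"
proof -
  have tS: "transpose S = S" unfolding S_def by (simp add: transpose_diff' matrix_transpose_mul)
  have cz: "inner (A ** X) (X ** S) = 0" by (rule cross_zero[OF assms(1) tS])
  have "(norm (A ** X + lam *\<^sub>R (X ** S)))^2 = (norm (A ** X))^2 + lam^2 * (norm (X ** S))^2"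
    unfolding power2_norm_eq_inner by (simp add: inner_add_left inner_add_right cz inner_commute power2_eq_square)
  also have "\<dots> \<le> (norm (A ** X))^2 + lam^2 * ((norm S)^2 + (norm S)^3)"
    using XS_bound[of X] unfolding S_def by (intro add_left_mono mult_left_mono) auto
  finally show ?thesis .
qed


lemma root_bound:
  fixes g t b e :: real
  assumes "g > 0" "t \<ge> 0" "b \<ge> 0" "e \<ge> 0" "g^2*t^2 \<le> 2*b*t + e"
  shows "t \<le> (b + sqrt (b^2 + g^2*e)) / g^2"
proof -
  have "g^2*(g^2*t^2) \<le> g^2*(2*b*t + e)" using assms(5) by (intro mult_left_mono) auto
  moreover have "(g^2*t - b)^2 = g^2*(g^2*t^2) - 2*b*g^2*t + b^2" by (simp add: power2_eq_square algebra_simps)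
  ultimately have "(g^2*t - b)^2 \<le> b^2 + g^2*e" by (simp add: algebra_simps)
  hence "g^2*t - b \<le> sqrt (b^2 + g^2*e)" by (rule real_le_rsqrt)
  hence "t * g^2 \<le> b + sqrt (b^2 + g^2*e)" by (simp add: algebra_simps)
  thus ?thesis using assms(1) by (simp add: pos_le_divide_eq)
qed

lemma K_nonneg:
  assumes "0 \<le> a" "0 \<le> d" "d \<le> eps" "eps < 1" "0 < lam"
  shows "0 \<le> Kfun lam eps a d"
  unfolding Kfun_def using assms by (intro divide_nonneg_nonneg add_nonneg_nonneg mult_nonneg_nonneg) auto

lemma Q_le:
  assumes "0 < a" "a \<le> atil" "0 < d" "d \<le> eps" "eps < 1" "0 < lam"
  shows "Qfun lam eps atil \<le> Kfun lam eps a d"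
  unfolding Qfun_def
proof (rule cInf_lower)
  show "Kfun lam eps a d \<in> {Kfun lam eps a d |a d. 0 < a \<and> a \<le> atil \<and> 0 < d \<and> d \<le> eps}"
    using assms by blast
  show "bdd_below {Kfun lam eps a d |a d. 0 < a \<and> a \<le> atil \<and> 0 < d \<and> d \<le> eps}"
    by (rule bdd_belowI[of _ 0]) (use assms K_nonneg in force)
qed


lemma Q_pos:
  assumes "0 < eps" "eps < 1" "0 < lam" "0 < atil"
  shows "0 < Qfun lam eps atil"
proof -
  define c1 where "c1 = min (lam*(1-eps)) (sqrt eps/2)"
  define c2 where "c2 = lam*(1-eps)*eps/(2*(atil+eps))"
  define c where "c = min c1 c2"
  define M where "M = atil + lam^2*(1+eps)*eps"
  have c1p: "c1 > 0" unfolding c1_def using assms by auto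
  have c2p: "c2 > 0" unfolding c2_def using assms by auto
  have cp: "c > 0" unfolding c_def using c1p c2p by auto
  have Mp: "M > 0" unfolding M_def using assms by (simp add: add_pos_nonneg)
  have low: "c / M \<le> Kfun lam eps a d" if a: "0 < a" "a \<le> atil" and d: "0 < d" "d \<le> eps" for a d
  proof -
    define N where "N = lam * (1 - eps) * d + a * sqrt ((eps - d) / 2)"
    define D where "D = a^2 + lam^2 * (1 + eps) * d^2"
    have Dp: "D > 0" unfolding D_def using a assms by (intro add_pos_nonneg mult_nonneg_nonneg) auto
    have "a^2 \<le> atil * a" using a by (simp add: power2_eq_square mult_right_mono)
    moreover have "lam^2 * (1 + eps) * d^2 \<le> lam^2*(1+eps)*eps * d"
      using d assms by (simp add: power2_eq_square mult_left_mono mult_right_mono)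
    moreover have "0 \<le> atil * d" using a d by simp
    moreover have "0 \<le> a * (lam^2*(1+eps)*eps)" using a assms by simp
    ultimately have DM: "D \<le> M * (a + d)" unfolding D_def M_def by (simp add: algebra_simps)
    have sq0: "0 \<le> sqrt ((eps - d) / 2)" using d by simp
    have N1: "lam * (1 - eps) * d \<le> N" unfolding N_def using a sq0 by simp
    have Nc: "c * (a + d) \<le> N"
    proof (cases "d \<le> eps/2")
      case True
      have "sqrt (eps/4) \<le> sqrt ((eps - d) / 2)" using True by simp
      moreover have "sqrt (eps/4) = sqrt eps / 2" by (simp add: real_sqrt_divide)
      ultimately have s: "sqrt eps / 2 \<le> sqrt ((eps - d) / 2)" by simp
      have "c * (a + d) \<le> c1 * (a + d)" unfolding c_def using a d by (intro mult_right_mono) auto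
      also have "\<dots> = c1 * a + c1 * d" by (simp add: algebra_simps)
      also have "c1 * a \<le> a * sqrt ((eps - d) / 2)"
      proof -
        have "c1 \<le> sqrt ((eps - d) / 2)" using s unfolding c1_def by linarith
        hence "c1 * a \<le> sqrt ((eps - d) / 2) * a" using a by (intro mult_right_mono) auto
        thus ?thesis by (simp add: mult.commute)
      qed
      also have "c1 * d \<le> lam * (1 - eps) * d" unfolding c1_def using d by (simp add: mult_right_mono)
      finally show ?thesis unfolding N_def by simp
    next
      case False
      have "c * (a + d) \<le> c2 * (atil + eps)" unfolding c_def using a d c2p cp
        by (intro mult_mono) auto
      also have "\<dots> = lam*(1-eps)*eps/2" unfolding c2_def using assms by (simp add: field_simps)
      also have "\<dots> \<le> lam * (1 - eps) * d" using False assms by (simp add: mult_left_mono)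
      finally show ?thesis using N1 by simp
    qed
    have "c / M = (c * (a+d)) / (M * (a+d))" using a d by simp
    also have "\<dots> \<le> N / D"
    proof (rule frac_le)
      show "0 \<le> N" using Nc cp a d by (smt (verit) mult_pos_pos)
      show "c * (a + d) \<le> N" by (rule Nc)
      show "0 < D" by (rule Dp)
      show "D \<le> M * (a + d)" by (rule DM)
    qed
    finally show ?thesis unfolding Kfun_def N_def D_def .
  qed
  have "c / M \<le> Qfun lam eps atil" unfolding Qfun_def
  proof (rule cInf_greatest)
    show "{Kfun lam eps a d |a d. 0 < a \<and> a \<le> atil \<and> 0 < d \<and> d \<le> eps} \<noteq> {}"
      using assms by blast
    fix x assume "x \<in> {Kfun lam eps a d |a d. 0 < a \<and> a \<le> atil \<and> 0 < d \<and> d \<le> eps}"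
    then obtain a d where "x = Kfun lam eps a d" "0 < a" "a \<le> atil" "0 < d" "d \<le> eps" by blast
    thus "c / M \<le> x" using low by simp
  qed
  moreover have "0 < c / M" using cp Mp by simp
  ultimately show ?thesis by simp
qed


lemma scalar_main:
  fixes eps lam atil a d g :: real
  assumes ep: "0 < eps" "eps < 1" and lp: "0 < lam" and ap: "0 < atil"
    and a: "0 \<le> a" "a \<le> atil" and d: "0 \<le> d" "d \<le> eps" and gp: "g > 0"
    and gU: "g^2 \<le> a^2 + lam^2*(1+eps)*d^2"
  shows "Qfun lam eps atil \<le> (lam*d*(1-d) + sqrt (lam^2*d^2*(1-d)^2 + g^2*(eps-d))) / g^2"
proof -
  define b where "b = lam*d*(1-d)"
  define e where "e = eps - d"
  define U where "U = a^2 + lam^2*(1+eps)*d^2"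
  define bb where "bb = lam*(1-eps)*d"
  have b0: "0 \<le> b" unfolding b_def using d ep lp by simp
  have e0: "0 \<le> e" unfolding e_def using d by simp
  have bb0: "0 \<le> bb" unfolding bb_def using d ep lp by simp
  have bbb: "bb \<le> b"
  proof -
    have "(1-eps)*d \<le> (1-d)*d" using d by (intro mult_right_mono) auto
    hence "lam*((1-eps)*d) \<le> lam*((1-d)*d)" using lp by (intro mult_left_mono) auto
    thus ?thesis unfolding bb_def b_def by (simp add: algebra_simps)
  qed
  have eq: "lam^2*d^2*(1-d)^2 = b^2" by (simp add: b_def power_mult_distrib)
  have U0: "0 \<le> U" unfolding U_def using ep by simp
  have gU': "g^2 \<le> U" using gU unfolding U_def .
  have key: "\<exists>t. 0 \<le> t \<and> g^2*t^2 \<le> 2*b*t + e \<and> Qfun lam eps atil \<le> t"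
  proof (cases "d = 0")
    case True
    have ba: "g^2 \<le> a^2" using gU True by simp
    have apos: "a > 0" using ba gp a by (cases "a = 0") auto
    define t where "t = sqrt eps / a"
    define d' where "d' = min eps (a * sqrt eps / (4*lam*(1-eps)))"
    have d'p: "0 < d'" unfolding d'_def using ep apos lp by simp
    have d'e: "d' \<le> eps" unfolding d'_def by simp
    have "lam*(1-eps)*d' \<le> lam*(1-eps)*(a * sqrt eps / (4*lam*(1-eps)))"
      unfolding d'_def using ep lp by (intro mult_left_mono) auto
    also have "\<dots> = a * sqrt eps / 4" using ep lp by (simp add: field_simps)
    finally have n1: "lam*(1-eps)*d' \<le> a * sqrt eps / 4" .
    have sq: "(3/4 * sqrt eps)^2 = 9/16 * eps"
      unfolding power_mult_distrib using ep by (simp add: power2_eq_square)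
    have "sqrt ((eps - d')/2) \<le> 3/4 * sqrt eps"
      by (rule real_le_lsqrt) (use ep d'p sq in auto)
    hence n2: "a * sqrt ((eps - d')/2) \<le> a * (3/4 * sqrt eps)" using a by (intro mult_left_mono) auto
    have "Kfun lam eps a d' \<le> (a * sqrt eps) / a^2"
      unfolding Kfun_def
    proof (rule frac_le)
      show "0 \<le> a * sqrt eps" using a ep by simp
      show "lam * (1 - eps) * d' + a * sqrt ((eps - d') / 2) \<le> a * sqrt eps" using n1 n2 by simp
      show "0 < a^2" using apos by simp
      show "a^2 \<le> a^2 + lam^2 * (1 + eps) * d'^2" using ep by simp
    qed
    also have "\<dots> = t" unfolding t_def using apos by (simp add: power2_eq_square)
    finally have Kt: "Kfun lam eps a d' \<le> t" .
    have "Qfun lam eps atil \<le> t" using Q_le[OF apos a(2) d'p d'e ep(2) lp] Kt by simp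
    moreover have "0 \<le> t" unfolding t_def using a ep by simp
    moreover have "g^2*t^2 \<le> 2*b*t + e"
    proof -
      have "g^2*t^2 \<le> a^2*t^2" using ba by (intro mult_right_mono) auto
      also have "\<dots> = eps" unfolding t_def using apos ep by (simp add: power_divide)
      finally show ?thesis unfolding b_def e_def using True by simp
    qed
    ultimately show ?thesis by blast
  next
    case False
    hence dp: "d > 0" using d by simp
    show ?thesis
    proof (cases "a = 0")
      case True
      define U0 where "U0 = lam^2*(1+eps)*d^2"
      have UU: "U = U0" unfolding U_def U0_def using True by simp
      have U0p: "U0 > 0" unfolding U0_def using ep lp dp by simp
      define t where "t = 2*bb/U0"
      define a' where "a' = min atil bb"
      have bbp: "bb > 0" unfolding bb_def using ep lp dp by simp
      have a'p: "0 < a'" unfolding a'_def using ap bbp by simp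
      have a'le: "a' \<le> atil" unfolding a'_def by simp
      have "sqrt ((eps - d)/2) \<le> 1" using ep d by simp
      hence "a' * sqrt ((eps - d)/2) \<le> a' * 1" using a'p by (intro mult_left_mono) auto
      also have "\<dots> \<le> bb" unfolding a'_def by simp
      finally have n: "a' * sqrt ((eps - d)/2) \<le> bb" .
      have "Kfun lam eps a' d \<le> t" unfolding Kfun_def t_def
      proof (rule frac_le)
        show "0 \<le> 2*bb" using bb0 by simp
        show "lam * (1 - eps) * d + a' * sqrt ((eps - d) / 2) \<le> 2 * bb" using n unfolding bb_def by linarith
        show "0 < U0" by (rule U0p)
        show "U0 \<le> a'^2 + lam^2 * (1 + eps) * d^2" unfolding U0_def by simp
      qed
      hence "Qfun lam eps atil \<le> t" using Q_le[OF a'p a'le dp d(2) ep(2) lp] by simp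
      moreover have t0: "0 \<le> t" unfolding t_def using bb0 U0p by simp
      moreover have "g^2*t^2 \<le> 2*b*t + e"
      proof -
        have "g^2*t^2 \<le> U0*t^2" using gU' UU by (intro mult_right_mono) auto
        also have "\<dots> = 2*bb*t" unfolding t_def using U0p by (simp add: power2_eq_square)
        also have "\<dots> \<le> 2*b*t" using bbb t0 by (intro mult_right_mono) auto
        finally show ?thesis using e0 by simp
      qed
      ultimately show ?thesis by blast
    next
      case False
      hence apos: "a > 0" using a by simp
      define ss where "ss = sqrt ((eps - d)/2)"
      define N where "N = bb + a * ss"
      define t where "t = N / U"
      have ss0: "0 \<le> ss" unfolding ss_def using d by simp
      have ss2: "ss^2 = e/2" unfolding ss_def e_def using d by simp
      have Up: "U > 0" unfolding U_def using apos ep by (simp add: add_pos_nonneg)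
      have tK: "t = Kfun lam eps a d" unfolding t_def N_def Kfun_def U_def bb_def ss_def by simp
      have Nbb: "bb \<le> N" unfolding N_def using apos ss0 by simp
      have N0: "0 \<le> N" using Nbb bb0 by simp
      have "N^2 \<le> 2*bb^2 + 2*(a * ss)^2"
      proof -
        have "0 \<le> (bb - a * ss)^2" by simp
        thus ?thesis unfolding N_def by (simp add: power2_eq_square algebra_simps)
      qed
      also have "2*(a * ss)^2 = e * a^2" using ss2 by (simp add: power_mult_distrib)
      also have "e * a^2 \<le> e * U" unfolding U_def using e0 ep by (intro mult_left_mono) auto
      also have "2*bb^2 \<le> 2*b*N"
      proof -
        have "bb*bb \<le> b*N" using bbb Nbb bb0 by (intro mult_mono) auto
        thus ?thesis by (simp add: power2_eq_square)
      qed
      finally have NN: "N^2 \<le> 2*b*N + e*U" by simp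
      have "g^2*t^2 \<le> U*t^2" using gU' by (intro mult_right_mono) auto
      also have "\<dots> = N^2 / U" unfolding t_def using Up by (simp add: power2_eq_square)
      also have "\<dots> \<le> (2*b*N + e*U) / U" using NN Up by (simp add: divide_right_mono)
      also have "\<dots> = 2*b*t + e" unfolding t_def using Up by (simp add: field_simps)
      finally have "g^2*t^2 \<le> 2*b*t + e" .
      moreover have "0 \<le> t" unfolding t_def using N0 Up by simp
      moreover have "Qfun lam eps atil \<le> t" using tK Q_le[OF apos a(2) dp d(2) ep(2) lp] by simp
      ultimately show ?thesis by blast
    qed
  qed
  then obtain t where t: "0 \<le> t" "g^2*t^2 \<le> 2*b*t + e" "Qfun lam eps atil \<le> t" by blast
  have "t \<le> (b + sqrt (b^2 + g^2*e)) / g^2" by (rule root_bound[OF gp t(1) b0 e0 t(2)])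
  thus ?thesis using t(3) unfolding eq b_def e_def by simp
qed


theorem lemma4:
  fixes lam eps atil :: real
  assumes "CARD('p::finite) \<le> CARD('n::finite)"
    and "0 < eps" and "eps < 1" and "0 < lam" and "0 < atil"
  shows "eta_star atil eps lam > 0 \<and>
    (\<forall>(X::real^'p^'n) (A::real^'n^'n).
       frob (transpose X ** X - mat 1) \<le> eps \<longrightarrow> transpose A = - A \<longrightarrow>
       frob (A ** X) \<le> atil \<longrightarrow> eta_safe lam eps A X \<ge> eta_star atil eps lam)"
proof (intro conjI allI impI)
  show "eta_star atil eps lam > 0"
    unfolding eta_star_def using Q_pos[OF assms(2,3,4,5)] assms(4) by simp
next
  fix X :: "real^'p^'n" and A :: "real^'n^'n"
  assume hd: "frob (transpose X ** X - mat 1) \<le> eps" and skew: "transpose A = - A"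
    and ha: "frob (A ** X) \<le> atil"
  define S where "S = transpose X ** X - mat 1"
  define d where "d = norm S"
  define a where "a = norm (A ** X)"
  define g where "g = norm (A ** X + lam *\<^sub>R (X ** S))"
  have d0: "0 \<le> d" "d \<le> eps" using hd unfolding d_def S_def frob_def by auto
  have a0: "0 \<le> a" "a \<le> atil" using ha unfolding a_def frob_def by auto
  have gb: "g^2 \<le> a^2 + lam^2*(d^2 + d^3)"
    unfolding g_def a_def d_def S_def by (rule g_bound[OF skew]) (use assms in simp)
  have "d * d^2 \<le> eps * d^2" using d0 by (intro mult_right_mono) auto
  hence "d^3 \<le> eps * d^2" by (simp add: power3_eq_cube power2_eq_square)
  hence "lam^2*(d^2 + d^3) \<le> lam^2*(d^2 + eps * d^2)"
    by (intro mult_left_mono) auto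
  hence "lam^2*(d^2 + d^3) \<le> lam^2*(1+eps)*d^2"
    by (simp add: algebra_simps)
  hence gU: "g^2 \<le> a^2 + lam^2*(1+eps)*d^2" using gb by simp
  have es: "eta_safe lam eps A X = (if g = 0 then 1 / (2 * lam)
        else min ((lam * d * (1 - d) + sqrt (lam^2 * d^2 * (1 - d)^2 + g^2 * (eps - d))) / g^2)
                 (1 / (2 * lam)))"
    unfolding eta_safe_def g_def d_def S_def frob_def Let_def by simp
  show "eta_safe lam eps A X \<ge> eta_star atil eps lam"
  proof (cases "g = 0")
    case True
    thus ?thesis unfolding es eta_star_def by simp
  next
    case False
    hence gp: "g > 0" unfolding g_def by simp
    have "Qfun lam eps atil \<le> (lam * d * (1 - d) + sqrt (lam^2 * d^2 * (1 - d)^2 + g^2 * (eps - d))) / g^2"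
      by (rule scalar_main[OF assms(2,3,4,5) a0 d0 gp gU])
    thus ?thesis unfolding es eta_star_def using False by (auto simp: min_def)
  qed
qed

end
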